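(* Let $G$ be a connected threshold graph of order $n\ge 4$ and size $m$ with $n-1<m<\binom{n}{2}$, let $c$ be its number of type 1 vertices, $(b_1,\ldots,b_z)$ its backwards zero position sequence, $F_1=\sum_{i=1}^z b_i^2$, and $\rho$ the spectral radius of its adjacency matrix. Then the greatest real root $\xi$ of the polynomial \[x^3-(c+1)x^2+\Big(c-\sum_{i=1}^z b_i\Big)x+\Big(c\sum_{i=1}^z b_i-F_1\Big)\] satisfies $\xi\ge 1+\rho$.
   Context: A threshold graph is a simple graph whose vertices can be ordered $v_1,\ldots,v_n$ so that for each $2\le i\le n$, $v_i$ is either adjacent to all of $v_1,\ldots,v_{i-1}$ (then $a_i=1$) or to none of them (then $a_i=0$); by convention $a_1=1$. Vertex $v_i$ is of type 1 if $a_i=1$ and of type 0 if $a_i=0$; $c$ and $z$ are the numbers of type 1 and type 0 vertices. The backwards zero position sequence $(b_1,\ldots,b_z)$ is defined by letting $b_i$ be the number of type 1 vertices appearing after the $i$-th type 0 vertex in the order $v_1,\ldots,v_n$. *)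

theory Defs
  imports "HOL-Computational_Algebra.Polynomial" "Jordan_Normal_Form.Spectral_Radius"
begin

definition simple_graph :: "nat \<Rightarrow> (nat \<Rightarrow> nat \<Rightarrow> bool) \<Rightarrow> bool" where
  "simple_graph n E \<longleftrightarrow>
     (\<forall>x y. E x y \<longrightarrow> x < n \<and> y < n) \<and> (\<forall>x y. E x y \<longrightarrow> E y x) \<and> (\<forall>x. \<not> E x x)"

definition graph_size :: "nat \<Rightarrow> (nat \<Rightarrow> nat \<Rightarrow> bool) \<Rightarrow> nat" where
  "graph_size n E = card {(x, y). x < y \<and> y < n \<and> E x y}"

definition graph_connected :: "nat \<Rightarrow> (nat \<Rightarrow> nat \<Rightarrow> bool) \<Rightarrow> bool" where
  "graph_connected n E \<longleftrightarrow> (\<forall>x<n. \<forall>y<n. E\<^sup>*\<^sup>* x y)"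

text \<open>Threshold ordering (0-indexed): v 0, ..., v (n-1) enumerates the vertices,
  a is the type sequence with the convention a 0 = True, and for 1 \<le> i < n the
  vertex v i is adjacent to all earlier vertices iff a i, and to none otherwise.\<close>
definition threshold_order ::
  "nat \<Rightarrow> (nat \<Rightarrow> nat \<Rightarrow> bool) \<Rightarrow> (nat \<Rightarrow> nat) \<Rightarrow> (nat \<Rightarrow> bool) \<Rightarrow> bool" where
  "threshold_order n E v a \<longleftrightarrow>
     bij_betw v {0..<n} {0..<n} \<and> a 0 \<and>
     (\<forall>i. 1 \<le> i \<and> i < n \<longrightarrow> (\<forall>j<i. E (v i) (v j) = a i))"

definition threshold_graph :: "nat \<Rightarrow> (nat \<Rightarrow> nat \<Rightarrow> bool) \<Rightarrow> bool" where
  "threshold_graph n E \<longleftrightarrow> simple_graph n E \<and> (\<exists>v a. threshold_order n E v a)"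

definition type1_count :: "nat \<Rightarrow> (nat \<Rightarrow> bool) \<Rightarrow> nat" where
  "type1_count n a = card {i. i < n \<and> a i}"

definition bzp :: "nat \<Rightarrow> (nat \<Rightarrow> bool) \<Rightarrow> nat \<Rightarrow> nat" where
  "bzp n a i = card {j. i < j \<and> j < n \<and> a j}"

definition bzp_sum :: "nat \<Rightarrow> (nat \<Rightarrow> bool) \<Rightarrow> nat" where
  "bzp_sum n a = (\<Sum>i\<in>{i. i < n \<and> \<not> a i}. bzp n a i)"

definition bzp_F1 :: "nat \<Rightarrow> (nat \<Rightarrow> bool) \<Rightarrow> nat" where
  "bzp_F1 n a = (\<Sum>i\<in>{i. i < n \<and> \<not> a i}. (bzp n a i)^2)"

definition adj_matrix :: "nat \<Rightarrow> (nat \<Rightarrow> nat \<Rightarrow> bool) \<Rightarrow> complex mat" where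
  "adj_matrix n E = mat n n (\<lambda>(i, j). if E i j then 1 else 0)"

definition thr_cubic :: "nat \<Rightarrow> (nat \<Rightarrow> bool) \<Rightarrow> real poly" where
  "thr_cubic n a =
     (let c = real (type1_count n a); s = real (bzp_sum n a); f = real (bzp_F1 n a)
      in [: c * s - f, c - s, - (c + 1), 1 :])"

definition greatest_real_root :: "real poly \<Rightarrow> real" where
  "greatest_real_root p = Max {x. poly p x = 0}"

end

theory Submission
  imports Defs
begin

lemma collatz:
  fixes n :: nat and E :: "nat \<Rightarrow> nat \<Rightarrow> bool" and w :: "nat \<Rightarrow> real" and t :: real
  assumes n: "n > 0"
    and wpos: "\<And>i. i < n \<Longrightarrow> w i > 0"
    and bnd: "\<And>i. i < n \<Longrightarrow> (\<Sum>j<n. if E i j then w j else 0) \<le> t * w i"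
  shows "spectral_radius (adj_matrix n E) \<le> t"
proof -
  define A where "A = adj_matrix n E"
  have A: "A \<in> carrier_mat n n" unfolding A_def adj_matrix_def by simp
  from spectral_radius_mem_max(1)[OF A n]
  obtain lam where lam: "lam \<in> spectrum A" and rho: "spectral_radius A = norm lam" by auto
  from lam obtain x where ev: "eigenvector A x lam"
    unfolding spectrum_def eigenvalue_def by auto
  from ev A have x: "x \<in> carrier_vec n" and x0: "x \<noteq> 0\<^sub>v n" and Ax: "A *\<^sub>v x = lam \<cdot>\<^sub>v x"
    unfolding eigenvector_def by auto
  define r where "r i = norm (x $ i) / w i" for i
  define R where "R = Max (r ` {..<n})"
  have fin: "finite (r ` {..<n})" by simp
  have ne: "r ` {..<n} \<noteq> {}" using n by auto
  obtain k where k: "k < n" "r k = R" using Max_in[OF fin ne] unfolding R_def by auto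
  have rle: "r j \<le> R" if "j < n" for j unfolding R_def using that by (intro Max_ge) auto
  have nx: "norm (x $ j) \<le> R * w j" if "j < n" for j
    using rle[OF that] wpos[OF that] unfolding r_def by (simp add: divide_le_eq)
  obtain j where j: "j < n" "x $ j \<noteq> 0"
  proof (rule ccontr)
    assume "\<not> thesis"
    with that have "\<forall>j<n. x $ j = 0" by blast
    hence "x = 0\<^sub>v n" using x by (intro eq_vecI) auto
    with x0 show False by simp
  qed
  have "r j > 0" unfolding r_def using j wpos[of j] by simp
  hence Rpos: "R > 0" using rle[OF j(1)] by simp
  have xk: "norm (x $ k) = R * w k" using k wpos[of k] unfolding r_def by (simp add: field_simps)
  have "(A *\<^sub>v x) $ k = (\<Sum>j<n. (if E k j then x $ j else 0))"
    using k x unfolding A_def adj_matrix_def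
    by (auto simp: scalar_prod_def lessThan_atLeast0 intro!: sum.cong)
  moreover have "(A *\<^sub>v x) $ k = lam * x $ k" using Ax k x by simp
  ultimately have eq: "lam * x $ k = (\<Sum>j<n. (if E k j then x $ j else 0))" by simp
  have "norm lam * (R * w k) = norm (lam * x $ k)" using xk by (simp add: norm_mult)
  also have "\<dots> \<le> (\<Sum>j<n. norm (if E k j then x $ j else 0))" unfolding eq by (rule norm_sum)
  also have "\<dots> \<le> (\<Sum>j<n. R * (if E k j then w j else 0))"
    by (intro sum_mono) (use nx in auto)
  also have "\<dots> = R * (\<Sum>j<n. (if E k j then w j else 0))" by (simp add: sum_distrib_left)
  also have "\<dots> \<le> R * (t * w k)" using bnd[OF k(1)] Rpos by simp
  finally have "norm lam * (R * w k) \<le> t * (R * w k)" by (simp add: algebra_simps)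
  hence "norm lam \<le> t" using Rpos wpos[OF k(1)] by simp
  thus ?thesis using rho unfolding A_def by simp
qed

definition adjp :: "(nat \<Rightarrow> bool) \<Rightarrow> nat \<Rightarrow> nat \<Rightarrow> bool" where
  "adjp a i j \<longleftrightarrow> (j < i \<and> a i) \<or> (i < j \<and> a j)"

lemma transfer:
  fixes n :: nat and E :: "nat \<Rightarrow> nat \<Rightarrow> bool" and v :: "nat \<Rightarrow> nat" and a :: "nat \<Rightarrow> bool"
    and W :: "nat \<Rightarrow> real" and t :: real
  assumes sg: "simple_graph n E" and tho: "threshold_order n E v a" and n: "n > 0"
    and Wpos: "\<And>i. i < n \<Longrightarrow> W i > 0"
    and bnd: "\<And>i. i < n \<Longrightarrow> (\<Sum>j<n. if adjp a i j then W j else 0) \<le> t * W i"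
  shows "spectral_radius (adj_matrix n E) \<le> t"
proof -
  have bij: "bij_betw v {..<n} {..<n}" using tho unfolding threshold_order_def
    by (simp add: lessThan_atLeast0)
  define vi where "vi = inv_into {..<n} v"
  have vi1: "vi y < n" "v (vi y) = y" if "y < n" for y
    using bij that unfolding vi_def
    by (auto simp: bij_betw_def f_inv_into_f) (metis inv_into_into lessThan_iff)
  have vi2: "vi (v i) = i" if "i < n" for i
    using bij that unfolding vi_def by (simp add: bij_betw_def inv_into_f_f)
  have vlt: "v i < n" if "i < n" for i using bij that by (auto simp: bij_betw_def)
  have Eadj: "E (v i) (v j) = adjp a i j" if "i < n" "j < n" for i j
  proof -
    have thr: "\<And>i j. 1 \<le> i \<Longrightarrow> i < n \<Longrightarrow> j < i \<Longrightarrow> E (v i) (v j) = a i"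
      using tho unfolding threshold_order_def by blast
    have sym: "\<And>x y. E x y \<Longrightarrow> E y x" and irr: "\<And>x. \<not> E x x"
      using sg unfolding simple_graph_def by blast+
    consider "j < i" | "i < j" | "i = j" by linarith
    then show ?thesis
    proof cases
      case 1 thus ?thesis using thr[of i j] that unfolding adjp_def by auto
    next
      case 2 thus ?thesis using thr[of j i] that sym unfolding adjp_def by (metis less_imp_le_nat less_one not_less_zero not_le  less_asym)
    next
      case 3 thus ?thesis using irr unfolding adjp_def by auto
    qed
  qed
  define w where "w y = W (vi y)" for y
  show ?thesis
  proof (rule collatz[OF n])
    show "w i > 0" if "i < n" for i using Wpos vi1[OF that] unfolding w_def by simp
    fix x assume x: "x < n"
    define i where "i = vi x"
    have i: "i < n" "v i = x" using vi1[OF x] unfolding i_def by auto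
    have "(\<Sum>y<n. if E x y then w y else 0) = (\<Sum>j<n. if E x (v j) then w (v j) else 0)"
      by (rule sum.reindex_bij_betw[OF bij, symmetric])
    also have "\<dots> = (\<Sum>j<n. if adjp a i j then W j else 0)"
      using i Eadj vi2 unfolding w_def by (intro sum.cong) auto
    also have "\<dots> \<le> t * W i" by (rule bnd[OF i(1)])
    also have "W i = w x" unfolding w_def i_def ..
    finally show "(\<Sum>j<n. if E x j then w j else 0) \<le> t * w x" .
  qed
qed


definition bb :: "nat \<Rightarrow> (nat \<Rightarrow> bool) \<Rightarrow> nat \<Rightarrow> real" where
  "bb n a i = (\<Sum>j<n. if i < j \<and> a j then 1 else 0)"
definition ss :: "nat \<Rightarrow> (nat \<Rightarrow> bool) \<Rightarrow> real" where
  "ss n a = (\<Sum>i<n. if \<not> a i then bb n a i else 0)"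
definition FF :: "nat \<Rightarrow> (nat \<Rightarrow> bool) \<Rightarrow> real" where
  "FF n a = (\<Sum>i<n. if \<not> a i then (bb n a i)^2 else 0)"
definition cc :: "nat \<Rightarrow> (nat \<Rightarrow> bool) \<Rightarrow> real" where
  "cc n a = (\<Sum>j<n. if a j then 1 else 0)"
definition Bk :: "nat \<Rightarrow> (nat \<Rightarrow> bool) \<Rightarrow> nat \<Rightarrow> real" where
  "Bk n a k = (\<Sum>i<n. if \<not> a i \<and> i < k then bb n a i else 0)"

lemma bb_nonneg: "bb n a i \<ge> 0" unfolding bb_def by (intro sum_nonneg) auto

lemma bb_ge1: assumes "i < k" "k < n" "a k" shows "bb n a i \<ge> 1"
proof -
  have "(if i < k \<and> a k then 1 else 0) \<le> bb n a i" unfolding bb_def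
    by (rule member_le_sum[where f="\<lambda>j. if i < j \<and> a j then 1 else (0::real)"]) (use assms in auto)
  thus ?thesis using assms by simp
qed

lemma Bk_le: "Bk n a k \<le> ss n a" unfolding Bk_def ss_def
  by (intro sum_mono) (auto simp: bb_nonneg)

lemma Bk_nonneg: "Bk n a k \<ge> 0" unfolding Bk_def
  by (intro sum_nonneg) (auto simp: bb_nonneg)

lemma sum_Bk: "(\<Sum>j<n. if a j then Bk n a j else 0) = FF n a"
proof -
  have "(\<Sum>j<n. if a j then Bk n a j else 0)
      = (\<Sum>j<n. \<Sum>i<n. if a j \<and> \<not> a i \<and> i < j then bb n a i else 0)"
    unfolding Bk_def by (intro sum.cong) (auto simp: sum.neutral)
  also have "\<dots> = (\<Sum>i<n. \<Sum>j<n. if a j \<and> \<not> a i \<and> i < j then bb n a i else 0)"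
    by (rule sum.swap)
  also have "\<dots> = (\<Sum>i<n. if \<not> a i then bb n a i * (\<Sum>j<n. if i < j \<and> a j then 1 else 0) else 0)"
    by (intro sum.cong) (auto simp: sum_distrib_left intro!: sum.cong)
  also have "\<dots> = FF n a" unfolding FF_def bb_def[symmetric] by (intro sum.cong) (auto simp: power2_eq_square)
  finally show ?thesis .
qed

lemma weights_main:
  fixes t \<beta> :: real
  assumes t: "t > 0" and \<beta>: "\<beta> > 0"
    and e1: "cc n a + \<beta> * FF n a = t + 1" and e2: "1 + \<beta> * ss n a = \<beta> * t * (t + 1)"
  shows "\<exists>W. (\<forall>i<n. W i > 0) \<and> (\<forall>i<n. (\<Sum>j<n. if adjp a i j then W j else 0) \<le> t * W i)"
proof -
  define U where "U j = 1 + \<beta> * Bk n a j" for j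
  define S where "S i = (\<Sum>j<n. if i < j \<and> a j then U j else 0)" for i
  define W where "W i = (if a i then U i else S i / t + (if bb n a i = 0 then 1 else 0))" for i
  have U1: "U j \<ge> 1" for j unfolding U_def using \<beta> Bk_nonneg[of n a j] by simp
  have Sge: "S i \<ge> bb n a i" for i unfolding S_def bb_def
    by (intro sum_mono) (use U1 in auto)
  have Sle: "S i \<le> bb n a i * (1 + \<beta> * ss n a)" for i
  proof -
    have "S i \<le> (\<Sum>j<n. if i < j \<and> a j then 1 + \<beta> * ss n a else 0)" unfolding S_def U_def
      by (intro sum_mono) (use \<beta> Bk_le[of n a] in auto)
    also have "\<dots> = bb n a i * (1 + \<beta> * ss n a)" unfolding bb_def sum_distrib_right
      by (intro sum.cong) auto
    finally show ?thesis .
  qed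
  have sumU: "(\<Sum>j<n. if a j then U j else 0) = cc n a + \<beta> * FF n a"
  proof -
    have "(\<Sum>j<n. if a j then U j else 0) = (\<Sum>j<n. (if a j then 1 else 0) + \<beta> * (if a j then Bk n a j else 0))"
      unfolding U_def by (intro sum.cong) auto
    also have "\<dots> = cc n a + \<beta> * FF n a"
      unfolding sum.distrib sum_distrib_left[symmetric] sum_Bk cc_def ..
    finally show ?thesis .
  qed
  show ?thesis
  proof (intro exI[of _ W] conjI allI impI)
    fix i assume i: "i < n"
    show "W i > 0"
    proof (cases "a i")
      case True thus ?thesis using U1[of i] unfolding W_def by simp
    next
      case False
      have "S i / t \<ge> 0" using Sge[of i] bb_nonneg[of n a i] t by simp
      moreover have "bb n a i \<noteq> 0 \<Longrightarrow> S i / t > 0" using Sge[of i] bb_nonneg[of n a i] t by simp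
      ultimately show ?thesis using False unfolding W_def by auto
    qed
  next
    fix k assume k: "k < n"
    show "(\<Sum>j<n. if adjp a k j then W j else 0) \<le> t * W k"
    proof (cases "a k")
      case False
      have "(\<Sum>j<n. if adjp a k j then W j else 0) = S k" unfolding S_def
        using False by (intro sum.cong) (auto simp: adjp_def W_def)
      also have "\<dots> \<le> t * W k" using False t unfolding W_def by (simp add: field_simps)
      finally show ?thesis .
    next
      case True
      have "(\<Sum>j<n. if adjp a k j then W j else 0)
          = (\<Sum>j<n. (if a j then U j else 0) - (if j = k then U k else 0) + (if \<not> a j \<and> j < k then W j else 0))"
        using True by (intro sum.cong) (auto simp: adjp_def W_def)
      also have "\<dots> = (cc n a + \<beta> * FF n a) - U k + (\<Sum>j<n. if \<not> a j \<and> j < k then W j else 0)"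
        using k by (simp add: sum.distrib sum_subtractf sumU)
      also have "(\<Sum>j<n. if \<not> a j \<and> j < k then W j else 0)
          \<le> (\<Sum>j<n. if \<not> a j \<and> j < k then bb n a j * ((1 + \<beta> * ss n a) / t) else 0)"
      proof (intro sum_mono)
        fix j assume j: "j \<in> {..<n}"
        show "(if \<not> a j \<and> j < k then W j else 0) \<le> (if \<not> a j \<and> j < k then bb n a j * ((1 + \<beta> * ss n a) / t) else 0)"
        proof (cases "\<not> a j \<and> j < k")
          case True
          hence "bb n a j \<ge> 1" using bb_ge1[of j k n a] k \<open>a k\<close> by auto
          hence "W j = S j / t" using True unfolding W_def by auto
          also have "\<dots> \<le> bb n a j * (1 + \<beta> * ss n a) / t" using Sle[of j] t by (simp add: divide_right_mono)
          finally show ?thesis using True by simp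
        next
          case False thus ?thesis by auto
        qed
      qed
      also have "\<dots> = Bk n a k * ((1 + \<beta> * ss n a) / t)" unfolding Bk_def sum_distrib_right
        by (intro sum.cong) auto
      also have "(1 + \<beta> * ss n a) / t = \<beta> * (t + 1)" using e2 t by (simp add: field_simps)
      finally have "(\<Sum>j<n. if adjp a k j then W j else 0) \<le> t + 1 - U k + Bk n a k * (\<beta> * (t + 1))"
        using e1 by simp
      also have "\<dots> = t * W k" using True unfolding W_def U_def by (simp add: algebra_simps)
      finally show ?thesis .
    qed
  qed
qed


lemma weights_zero:
  assumes F: "FF n a = 0" and a0: "a 0" and n: "n > 0" and k: "k < n"
  shows "(\<Sum>j<n. if adjp a k j then 1 else 0) \<le> (cc n a - 1) * (1::real)"
proof -
  have "\<forall>i\<in>{..<n}. (if \<not> a i then (bb n a i)^2 else 0) = 0"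
    using F unfolding FF_def by (subst sum_nonneg_eq_0_iff[symmetric]) auto
  hence b0: "bb n a i = 0" if "i < n" "\<not> a i" for i
  proof -
    have "(if \<not> a i then (bb n a i)^2 else 0) = 0" using that \<open>\<forall>i\<in>{..<n}. _\<close> by blast
    thus ?thesis using that by simp
  qed
  have c1: "cc n a \<ge> 1"
  proof -
    have "(if a 0 then 1 else 0) \<le> cc n a" unfolding cc_def
      by (rule member_le_sum[where f="\<lambda>j. if a j then 1 else (0::real)"]) (use n in auto)
    thus ?thesis using a0 by simp
  qed
  show ?thesis
  proof (cases "a k")
    case False
    have "(\<Sum>j<n. if adjp a k j then 1 else 0) = bb n a k" unfolding bb_def
      using False by (intro sum.cong) (auto simp: adjp_def)
    thus ?thesis using b0[OF k False] c1 by simp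
  next
    case True
    have "(\<Sum>j<n. if adjp a k j then 1 else (0::real))
        = (\<Sum>j<n. (if a j then 1 else 0) - (if j = k then 1 else 0))"
    proof (intro sum.cong refl)
      fix j assume j: "j \<in> {..<n}"
      have "\<not> (\<not> a j \<and> j < k)"
        using bb_ge1[of j k n a] b0[of j] j k True by auto
      thus "(if adjp a k j then 1 else (0::real)) = (if a j then 1 else 0) - (if j = k then 1 else 0)"
        using True by (auto simp: adjp_def)
    qed
    also have "\<dots> = cc n a - 1" using k by (simp add: sum_subtractf cc_def)
    finally show ?thesis by simp
  qed
qed

lemma bzp_eq: "real (bzp n a i) = bb n a i"
proof -
  have "{j. i < j \<and> j < n \<and> a j} = {j\<in>{..<n}. i < j \<and> a j}" by auto
  hence "real (bzp n a i) = (\<Sum>j\<in>{j\<in>{..<n}. i < j \<and> a j}. 1)" unfolding bzp_def by simp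
  also have "\<dots> = bb n a i" unfolding bb_def by (rule sum.inter_filter) simp
  finally show ?thesis .
qed

lemma type1_eq: "real (type1_count n a) = cc n a"
proof -
  have "{i. i < n \<and> a i} = {j\<in>{..<n}. a j}" by auto
  hence "real (type1_count n a) = (\<Sum>j\<in>{j\<in>{..<n}. a j}. 1)" unfolding type1_count_def by simp
  also have "\<dots> = cc n a" unfolding cc_def by (rule sum.inter_filter) simp
  finally show ?thesis .
qed

lemma sum_eq: "real (bzp_sum n a) = ss n a"
proof -
  have "{i. i < n \<and> \<not> a i} = {j\<in>{..<n}. \<not> a j}" by auto
  hence "real (bzp_sum n a) = (\<Sum>j\<in>{j\<in>{..<n}. \<not> a j}. bb n a j)" unfolding bzp_sum_def
    by (simp add: bzp_eq)
  also have "\<dots> = ss n a" unfolding ss_def by (rule sum.inter_filter) simp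
  finally show ?thesis .
qed

lemma F1_eq: "real (bzp_F1 n a) = FF n a"
proof -
  have "{i. i < n \<and> \<not> a i} = {j\<in>{..<n}. \<not> a j}" by auto
  hence "real (bzp_F1 n a) = (\<Sum>j\<in>{j\<in>{..<n}. \<not> a j}. (bb n a j)^2)" unfolding bzp_F1_def
    by (simp add: bzp_eq)
  also have "\<dots> = FF n a" unfolding FF_def by (rule sum.inter_filter) simp
  finally show ?thesis .
qed

lemma ss_nonneg: "ss n a \<ge> 0" unfolding ss_def by (intro sum_nonneg) (auto simp: bb_nonneg)
lemma FF_nonneg: "FF n a \<ge> 0" unfolding FF_def by (intro sum_nonneg) auto

theorem theorem5p1:
  fixes n :: nat and E :: "nat \<Rightarrow> nat \<Rightarrow> bool" and v :: "nat \<Rightarrow> nat" and a :: "nat \<Rightarrow> bool"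
  assumes "simple_graph n E"
    and "threshold_order n E v a"
    and "graph_connected n E"
    and "n \<ge> 4"
    and "n - 1 < graph_size n E" and "graph_size n E < n choose 2"
  shows "greatest_real_root (thr_cubic n a) \<ge> 1 + spectral_radius (adj_matrix n E)"
proof -
  note sg = assms(1) and tho = assms(2)
  have n: "n > 0" using assms(4) by simp
  have a0: "a 0" using tho unfolding threshold_order_def by simp
  define c where "c = cc n a"
  define s where "s = ss n a"
  define F where "F = FF n a"
  define p where "p = thr_cubic n a"
  have s0: "s \<ge> 0" unfolding s_def by (rule ss_nonneg)
  have F0: "F \<ge> 0" unfolding F_def by (rule FF_nonneg)
  have polyp: "poly p x = (x - c) * (x^2 - x - s) - F" for x
    unfolding p_def thr_cubic_def Let_def type1_eq sum_eq F1_eq c_def s_def F_def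
    by (simp add: algebra_simps power2_eq_square power3_eq_cube)
  have "coeff p 3 = 1" unfolding p_def thr_cubic_def Let_def by (simp add: eval_nat_numeral)
  hence p0: "p \<noteq> 0" by auto
  have fin: "finite {x. poly p x = 0}" by (rule poly_roots_finite[OF p0])
  define xi where "xi = greatest_real_root p"
  have xi_ge: "r \<le> xi" if "poly p r = 0" for r
    unfolding xi_def greatest_real_root_def using fin that by (intro Max_ge) auto
  have xi_root: "poly p xi = 0" if "poly p r = 0" for r
  proof -
    have "{x. poly p x = 0} \<noteq> {}" using that by auto
    from Max_in[OF fin this] show ?thesis unfolding xi_def greatest_real_root_def by simp
  qed
  show ?thesis
  proof (cases "F = 0")
    case True
    have "poly p c = 0" unfolding polyp using True by simp
    hence xc: "c \<le> xi" by (rule xi_ge)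
    have "spectral_radius (adj_matrix n E) \<le> cc n a - 1"
      by (rule transfer[OF sg tho n, where W="\<lambda>_. 1"])
         (use weights_zero[of n a] True F_def a0 n in auto)
    thus ?thesis using xc unfolding xi_def p_def c_def by simp
  next
    case False
    hence Fp: "F > 0" using F0 by simp
    define y where "y = (1 + sqrt (1 + 4 * s)) / 2"
    have sq: "sqrt (1 + 4 * s) \<ge> 1" using s0 by simp
    have y1: "y \<ge> 1" unfolding y_def using sq by simp
    have "(sqrt (1 + 4 * s))^2 = 1 + 4 * s" using s0 by simp
    hence ys: "y^2 - y = s" unfolding y_def by (simp add: power2_eq_square algebra_simps)
    have py: "poly p y < 0" unfolding polyp using ys Fp by simp
    define Y where "Y = y + c + F + 1"
    have c0: "c \<ge> 0" unfolding c_def cc_def by (intro sum_nonneg) auto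
    have "Y^2 - Y - s = (Y - y) * (Y + y - 1)" using ys by (simp add: algebra_simps power2_eq_square)
    moreover have "Y - y \<ge> 1" "Y + y - 1 \<ge> 1" unfolding Y_def using c0 F0 y1 by auto
    ultimately have "Y^2 - Y - s \<ge> 1 * 1" using mult_mono[of "1::real" "Y - y" 1 "Y + y - 1"] by simp
    moreover have "Y - c \<ge> F + 2" unfolding Y_def using y1 by simp
    ultimately have "(Y - c) * (Y^2 - Y - s) \<ge> (F + 2) * 1"
      using F0 by (intro mult_mono) auto
    hence pY: "poly p Y > 0" unfolding polyp by simp
    have "y < Y" unfolding Y_def using c0 F0 by simp
    from poly_IVT_pos[OF this py pY] obtain r where r: "y < r" "poly p r = 0" by auto
    have xr: "poly p xi = 0" by (rule xi_root[OF r(2)])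
    have xy: "xi > y" using xi_ge[OF r(2)] r(1) by simp
    have "xi^2 - xi - s = (xi - y) * (xi + y - 1)" using ys by (simp add: algebra_simps power2_eq_square)
    moreover have "xi + y - 1 > 0" using xy y1 by simp
    ultimately have D: "xi^2 - xi - s > 0" using xy by simp
    define t where "t = xi - 1"
    define \<beta> where "\<beta> = 1 / (xi^2 - xi - s)"
    have t: "t > 0" unfolding t_def using xy y1 by simp
    have bpos: "\<beta> > 0" unfolding \<beta>_def using D by simp
    have "(xi - c) * (xi^2 - xi - s) = F" using xr unfolding polyp by simp
    hence e1: "c + \<beta> * F = t + 1" unfolding \<beta>_def t_def using D by (simp add: field_simps)
    have e2: "1 + \<beta> * s = \<beta> * t * (t + 1)" unfolding \<beta>_def t_def using D
      by (simp add: field_simps power2_eq_square)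
    obtain W where W: "\<forall>i<n. W i > 0" "\<forall>i<n. (\<Sum>j<n. if adjp a i j then W j else 0) \<le> t * W i"
      using weights_main[OF t bpos e1[unfolded c_def F_def] e2[unfolded s_def]] by blast
    have "spectral_radius (adj_matrix n E) \<le> t"
      by (rule transfer[OF sg tho n, where W=W]) (use W in auto)
    thus ?thesis unfolding t_def xi_def p_def by simp
  qed
qed

end
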